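(* Let $G$ be a finite semi-3-abelian 3-group and let $x\in\Omega_{1}(G)$. Then for all $a,b\in G$, $$[x,b,a]\,[x,a,b]=1.$$
   Context: A finite 3-group $G$ is semi-3-abelian if for all $a,b\in G$: $(ab)^{3}=1$ if and only if $a^{3}b^{3}=1$. $\Omega_{1}(G)=\langle g\in G : g^{3}=1\rangle$. Commutators: $[x,y]=x^{-1}y^{-1}xy$, and left-normed $[x_1,\dots,x_n]=[[x_1,\dots,x_{n-1}],x_n]$. *)

theory Defs
  imports "HOL-Algebra.Algebra"
begin

definition is_p_group :: "nat \<Rightarrow> ('a, 'b) monoid_scheme \<Rightarrow> bool" where
  "is_p_group p G \<longleftrightarrow> group G \<and> finite (carrier G) \<and> (\<exists>n. order G = p ^ n)"

definition semi_p_abelian :: "nat \<Rightarrow> ('a, 'b) monoid_scheme \<Rightarrow> bool" where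
  "semi_p_abelian p G \<longleftrightarrow>
     (\<forall>a\<in>carrier G. \<forall>b\<in>carrier G.
        (a \<otimes>\<^bsub>G\<^esub> b) [^]\<^bsub>G\<^esub> p = \<one>\<^bsub>G\<^esub> \<longleftrightarrow>
        (a [^]\<^bsub>G\<^esub> p) \<otimes>\<^bsub>G\<^esub> (b [^]\<^bsub>G\<^esub> p) = \<one>\<^bsub>G\<^esub>)"

definition Omega1 :: "nat \<Rightarrow> ('a, 'b) monoid_scheme \<Rightarrow> 'a set" where
  "Omega1 p G = generate G {g \<in> carrier G. g [^]\<^bsub>G\<^esub> p = \<one>\<^bsub>G\<^esub>}"

definition comm :: "('a, 'b) monoid_scheme \<Rightarrow> 'a \<Rightarrow> 'a \<Rightarrow> 'a" where
  "comm G x y = inv\<^bsub>G\<^esub> x \<otimes>\<^bsub>G\<^esub> inv\<^bsub>G\<^esub> y \<otimes>\<^bsub>G\<^esub> x \<otimes>\<^bsub>G\<^esub> y"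

definition comm3 :: "('a, 'b) monoid_scheme \<Rightarrow> 'a \<Rightarrow> 'a \<Rightarrow> 'a \<Rightarrow> 'a" where
  "comm3 G x y z = comm G (comm G x y) z"

end

theory Submission
  imports Defs
begin

lemma (in comm_group) cube_cancel:
  assumes e3: "\<And>z. z \<in> carrier G \<Longrightarrow> z \<otimes> z \<otimes> z = \<one>"
  shows "z \<in> carrier G \<Longrightarrow> w \<in> carrier G \<Longrightarrow> z \<otimes> (z \<otimes> (z \<otimes> w)) = w"
    and "z \<in> carrier G \<Longrightarrow> z \<otimes> (z \<otimes> z) = \<one>"
  using e3 by (simp_all flip: m_assoc)

lemma (in comm_group) key:
  assumes e3: "\<And>z. z \<in> carrier G \<Longrightarrow> z \<otimes> z \<otimes> z = \<one>"
  and Pc: "\<And>y. y \<in> carrier G \<Longrightarrow> P y \<in> carrier G"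
  and Ph: "\<And>y z. y\<in>carrier G \<Longrightarrow> z \<in> carrier G \<Longrightarrow> P (y \<otimes> z) = P y \<otimes> P z"
  and PP: "\<And>y. y\<in>carrier G \<Longrightarrow> P (P y) = \<one>"
  and Rc: "\<And>y. y \<in> carrier G \<Longrightarrow> R y \<in> carrier G"
  and Rh: "\<And>y z. y\<in>carrier G \<Longrightarrow> z \<in> carrier G \<Longrightarrow> R (y \<otimes> z) = R y \<otimes> R z"
  and RR: "\<And>y. y\<in>carrier G \<Longrightarrow> R (R y) = \<one>"
  and E1: "\<And>y. y\<in>carrier G \<Longrightarrow> (let M = (\<lambda>y. P y \<otimes> R y \<otimes> R (P y)) in M (M y)) = \<one>"
  and E2: "\<And>y. y\<in>carrier G \<Longrightarrow> (let M = (\<lambda>y. inv P y \<otimes> R y \<otimes> R (inv P y)) in M (M y)) = \<one>"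
  and E3: "\<And>y. y\<in>carrier G \<Longrightarrow> (let M = (\<lambda>y. P y \<otimes> inv R y \<otimes> inv R (P y)) in M (M y)) = \<one>"
  and y: "y \<in> carrier G"
  shows "P (R y) \<otimes> R (P y) = \<one>"
proof -
  have invsq: "\<And>z. z \<in> carrier G \<Longrightarrow> inv z = z \<otimes> z"
    by (metis e3 inv_char m_closed m_comm)
  have P1: "P \<one> = \<one>" using Ph[of \<one> \<one>] Pc[of \<one>] by (metis l_one one_closed r_cancel_one')
  have R1: "R \<one> = \<one>" using Rh[of \<one> \<one>] Rc[of \<one>] by (metis l_one one_closed r_cancel_one')
  note cc = cube_cancel[OF e3]
  have idem: "\<And>x. x \<in> carrier G \<Longrightarrow> x = x \<otimes> x \<longleftrightarrow> x = \<one>"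
    by (metis l_one r_cancel_one)
  have F: "\<And>y. y\<in>carrier G \<Longrightarrow> P (R y) \<otimes> (R (P y) \<otimes> (P (R (P y)) \<otimes> (R (P (R y)) \<otimes> R (P (R (P y)))))) = \<one>"
    using E1 by (simp add: Let_def Pc Rc Ph Rh PP RR P1 R1 m_ac cc invsq)
  have F2: "\<And>y. y\<in>carrier G \<Longrightarrow> P (R y) \<otimes> (P (R y) \<otimes> (R (P y) \<otimes> (R (P y) \<otimes> (P (R (P y)) \<otimes> (R (P (R y)) \<otimes> (R (P (R y)) \<otimes> R (P (R (P y))))))))) = \<one>"
    using E2 by (simp add: Let_def Pc Rc Ph Rh PP RR P1 R1 m_ac cc invsq)
  have F3: "\<And>y. y\<in>carrier G \<Longrightarrow> P (R y) \<otimes> (P (R y) \<otimes> (R (P y) \<otimes> (R (P y) \<otimes> (P (R (P y)) \<otimes> (P (R (P y)) \<otimes> (R (P (R y)) \<otimes> R (P (R (P y))))))))) = \<one>"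
    using E3 by (simp add: Let_def Pc Rc Ph Rh PP RR P1 R1 m_ac cc invsq)
  have G1: "\<And>y. y\<in>carrier G \<Longrightarrow> P (R y) \<otimes> (R (P y) \<otimes> R (P (R y))) = \<one>"
  proof -
    fix y assume y: "y \<in> carrier G"
    have "P (R y) \<otimes> (R (P y) \<otimes> R (P (R y))) =
      (P (R y) \<otimes> (R (P y) \<otimes> (P (R (P y)) \<otimes> (R (P (R y)) \<otimes> R (P (R (P y))))))) \<otimes>
      ((P (R y) \<otimes> (P (R y) \<otimes> (R (P y) \<otimes> (R (P y) \<otimes> (P (R (P y)) \<otimes> (R (P (R y)) \<otimes> (R (P (R y)) \<otimes> R (P (R (P y)))))))))) \<otimes>
      ((P (R y) \<otimes> (P (R y) \<otimes> (R (P y) \<otimes> (R (P y) \<otimes> (P (R (P y)) \<otimes> (R (P (R y)) \<otimes> (R (P (R y)) \<otimes> R (P (R (P y)))))))))) \<otimes>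
      ((P (R y) \<otimes> (R (P y) \<otimes> R (P (R y)))) \<otimes> (P (R y) \<otimes> (R (P y) \<otimes> R (P (R y)))))))"
      using y by (simp add: Pc Rc m_ac cc)
    note eq = this[unfolded F[OF y] F2[OF y]]
    have "P (R y) \<otimes> (R (P y) \<otimes> R (P (R y))) \<in> carrier G" using y by (simp add: Pc Rc)
    with eq show "P (R y) \<otimes> (R (P y) \<otimes> R (P (R y))) = \<one>" by (metis l_one m_closed idem)
  qed
  have G2: "\<And>y. y\<in>carrier G \<Longrightarrow> P (R y) \<otimes> (R (P y) \<otimes> P (R (P y))) = \<one>"
  proof -
    fix y assume y: "y \<in> carrier G"
    have "P (R y) \<otimes> (R (P y) \<otimes> P (R (P y))) =
      (P (R y) \<otimes> (R (P y) \<otimes> (P (R (P y)) \<otimes> (R (P (R y)) \<otimes> R (P (R (P y))))))) \<otimes>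
      ((P (R y) \<otimes> (P (R y) \<otimes> (R (P y) \<otimes> (R (P y) \<otimes> (P (R (P y)) \<otimes> (P (R (P y)) \<otimes> (R (P (R y)) \<otimes> R (P (R (P y)))))))))) \<otimes>
      ((P (R y) \<otimes> (P (R y) \<otimes> (R (P y) \<otimes> (R (P y) \<otimes> (P (R (P y)) \<otimes> (P (R (P y)) \<otimes> (R (P (R y)) \<otimes> R (P (R (P y)))))))))) \<otimes>
      ((P (R y) \<otimes> (R (P y) \<otimes> P (R (P y)))) \<otimes> (P (R y) \<otimes> (R (P y) \<otimes> P (R (P y)))))))"
      using y by (simp add: Pc Rc m_ac cc)
    note eq = this[unfolded F[OF y] F3[OF y]]
    have "P (R y) \<otimes> (R (P y) \<otimes> P (R (P y))) \<in> carrier G" using y by (simp add: Pc Rc)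
    with eq show "P (R y) \<otimes> (R (P y) \<otimes> P (R (P y))) = \<one>" by (metis l_one m_closed idem)
  qed
  have G3: "\<And>y. y\<in>carrier G \<Longrightarrow> P (R (P y)) = R (P (R y))"
  proof -
    fix y assume y: "y \<in> carrier G"
    have "P (R (P y)) = (P (R y) \<otimes> (R (P y) \<otimes> P (R (P y)))) \<otimes> ((P (R y) \<otimes> (R (P y) \<otimes> R (P (R y)))) \<otimes>
       ((P (R y) \<otimes> (R (P y) \<otimes> R (P (R y)))) \<otimes> R (P (R y))))"
      using y by (simp add: Pc Rc m_ac cc)
    then show "P (R (P y)) = R (P (R y))" using G1[OF y] G2[OF y] y by (simp add: Pc Rc)
  qed
  have t5: "R (P (R (P y))) = \<one>" using G3[of "P y"] y by (simp add: Pc PP R1 P1)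
  have t4: "R (P (R y)) = \<one>"
  proof -
    have "R (P (R y)) = (P (R y) \<otimes> (R (P y) \<otimes> (P (R (P y)) \<otimes> (R (P (R y)) \<otimes> R (P (R (P y))))))) \<otimes>
       ((P (R y) \<otimes> (R (P y) \<otimes> P (R (P y)))) \<otimes> ((P (R y) \<otimes> (R (P y) \<otimes> P (R (P y)))) \<otimes> inv (R (P (R (P y))))))"
      using y by (simp add: Pc Rc m_ac cc invsq)
    then show ?thesis using F[OF y] G2[OF y] t5 y by (simp add: Pc Rc)
  qed
  show ?thesis using G1[OF y] t4 y by (simp add: Pc Rc)
qed

lemma (in group) cancel_inv:
  "x \<in> carrier G \<Longrightarrow> w \<in> carrier G \<Longrightarrow> x \<otimes> (inv x \<otimes> w) = w"
  "x \<in> carrier G \<Longrightarrow> w \<in> carrier G \<Longrightarrow> inv x \<otimes> (x \<otimes> w) = w"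
  by (simp_all flip: m_assoc)

lemma (in comm_group) hom_facts:
  assumes Tc: "\<And>y. y \<in> carrier G \<Longrightarrow> T y \<in> carrier G"
  and Th: "\<And>y z. y\<in>carrier G \<Longrightarrow> z \<in> carrier G \<Longrightarrow> T (y \<otimes> z) = T y \<otimes> T z"
  shows "T \<one> = \<one>" and "\<And>y. y \<in> carrier G \<Longrightarrow> T (inv y) = inv (T y)"
proof -
  show T1: "T \<one> = \<one>" using Th[of \<one> \<one>] Tc[of \<one>] by (metis l_one one_closed r_cancel_one')
  fix y assume y: "y \<in> carrier G"
  have "T y \<otimes> T (inv y) = \<one>" using Th[of y "inv y"] y T1 by simp
  then show "T (inv y) = inv (T y)" using y Tc by (metis inv_char m_comm inv_closed)
qed

lemma (in comm_group) key2:
  assumes e3: "\<And>z. z \<in> carrier G \<Longrightarrow> z \<otimes> z \<otimes> z = \<one>"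
  and Ac: "\<And>y. y \<in> carrier G \<Longrightarrow> A y \<in> carrier G"
  and Ah: "\<And>y z. y\<in>carrier G \<Longrightarrow> z \<in> carrier G \<Longrightarrow> A (y \<otimes> z) = A y \<otimes> A z"
  and A'c: "\<And>y. y \<in> carrier G \<Longrightarrow> A' y \<in> carrier G"
  and A'h: "\<And>y z. y\<in>carrier G \<Longrightarrow> z \<in> carrier G \<Longrightarrow> A' (y \<otimes> z) = A' y \<otimes> A' z"
  and AA': "\<And>y. y \<in> carrier G \<Longrightarrow> A (A' y) = y"
  and Bc: "\<And>y. y \<in> carrier G \<Longrightarrow> B y \<in> carrier G"
  and Bh: "\<And>y z. y\<in>carrier G \<Longrightarrow> z \<in> carrier G \<Longrightarrow> B (y \<otimes> z) = B y \<otimes> B z"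
  and B'c: "\<And>y. y \<in> carrier G \<Longrightarrow> B' y \<in> carrier G"
  and B'h: "\<And>y z. y\<in>carrier G \<Longrightarrow> z \<in> carrier G \<Longrightarrow> B' (y \<otimes> z) = B' y \<otimes> B' z"
  and BB': "\<And>y. y \<in> carrier G \<Longrightarrow> B (B' y) = y"
  and QA: "\<And>y. y \<in> carrier G \<Longrightarrow> A (A y) \<otimes> A y \<otimes> y = \<one>"
  and QB: "\<And>y. y \<in> carrier G \<Longrightarrow> B (B y) \<otimes> B y \<otimes> y = \<one>"
  and QBA0: "\<And>y. y \<in> carrier G \<Longrightarrow> B (A (B (A y))) \<otimes> B (A y) \<otimes> y = \<one>"
  and QBA'0: "\<And>y. y \<in> carrier G \<Longrightarrow> B (A' (B (A' y))) \<otimes> B (A' y) \<otimes> y = \<one>"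
  and QB'A0: "\<And>y. y \<in> carrier G \<Longrightarrow> B' (A (B' (A y))) \<otimes> B' (A y) \<otimes> y = \<one>"
  and y: "y \<in> carrier G"
  shows "inv (inv y \<otimes> B y) \<otimes> A (inv y \<otimes> B y) \<otimes> (inv (inv y \<otimes> A y) \<otimes> B (inv y \<otimes> A y)) = \<one>"
proof -
  define D where "D T y = inv y \<otimes> T y" for T :: "'a \<Rightarrow> 'a" and y
  have invsq: "\<And>z. z \<in> carrier G \<Longrightarrow> inv z = z \<otimes> z"
    by (metis e3 inv_char m_closed m_comm)
  note cc = cube_cancel[OF e3]
  have gen: "D T (D T y) = \<one>" "D T (y \<otimes> z) = D T y \<otimes> D T z" "D T y \<in> carrier G"
    if Tc: "\<And>y. y \<in> carrier G \<Longrightarrow> T y \<in> carrier G"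
    and Th: "\<And>y z. y\<in>carrier G \<Longrightarrow> z \<in> carrier G \<Longrightarrow> T (y \<otimes> z) = T y \<otimes> T z"
    and QT: "\<And>y. y \<in> carrier G \<Longrightarrow> T (T y) \<otimes> T y \<otimes> y = \<one>"
    and y: "y \<in> carrier G" and z: "z \<in> carrier G" for T y z
  proof -
    note hf = hom_facts[of T, OF Tc Th]
    show "D T y \<in> carrier G" using y Tc by (simp add: D_def)
    show "D T (y \<otimes> z) = D T y \<otimes> D T z" using y z Tc by (simp add: D_def Th hf m_ac inv_mult)
    have "T (T y) \<otimes> (T y \<otimes> y) = \<one>" using QT[OF y] y Tc by (simp add: m_assoc)
    hence tt: "inv (T y \<otimes> y) = T (T y)" by (rule inv_equality) (use y Tc in auto)
    have "D T (D T y) = inv (inv y \<otimes> T y) \<otimes> (inv (T y) \<otimes> inv (T y \<otimes> y))"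
      using y Tc by (simp add: D_def Th hf tt)
    also have "\<dots> = inv (T y \<otimes> T y \<otimes> T y)"
      using y Tc by (simp add: inv_mult m_ac cancel_inv)
    finally show "D T (D T y) = \<one>" using y Tc e3 by simp
  qed
  have compo: "D (\<lambda>y. U (W y)) y = D W y \<otimes> D U y \<otimes> D U (D W y)"
    if Uc: "\<And>y. y \<in> carrier G \<Longrightarrow> U y \<in> carrier G"
    and Uh: "\<And>y z. y\<in>carrier G \<Longrightarrow> z \<in> carrier G \<Longrightarrow> U (y \<otimes> z) = U y \<otimes> U z"
    and Wc: "\<And>y. y \<in> carrier G \<Longrightarrow> W y \<in> carrier G"
    and y: "y \<in> carrier G" for U W y
  proof -
    note hf = hom_facts[of U, OF Uc Uh]
    show ?thesis using y Uc Wc by (simp add: D_def Uh hf m_ac invsq cc)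
  qed
  have inverse: "D W2 y = inv (D W y)"
    if Wc: "\<And>y. y \<in> carrier G \<Longrightarrow> W y \<in> carrier G"
    and Wh: "\<And>y z. y\<in>carrier G \<Longrightarrow> z \<in> carrier G \<Longrightarrow> W (y \<otimes> z) = W y \<otimes> W z"
    and W2c: "\<And>y. y \<in> carrier G \<Longrightarrow> W2 y \<in> carrier G"
    and WW2: "\<And>y. y \<in> carrier G \<Longrightarrow> W (W2 y) = y"
    and QW: "\<And>y. y \<in> carrier G \<Longrightarrow> W (W y) \<otimes> W y \<otimes> y = \<one>"
    and y: "y \<in> carrier G" for W W2 y
  proof -
    note hf = hom_facts[of W, OF Wc Wh]
    have z: "W2 y \<in> carrier G" using W2c y by simp
    have "W2 y = D W (D W (W2 y)) \<otimes> (y \<otimes> (y \<otimes> inv (W y)))"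
      using y z Wc by (simp add: D_def Wh hf WW2 m_ac invsq cc)
    then have "W2 y = y \<otimes> (y \<otimes> inv (W y))"
      using gen(1)[OF Wc Wh QW z] y Wc by simp
    then show ?thesis using y Wc by (simp add: D_def m_ac invsq cc inv_mult)
  qed
  have BAc: "\<And>y. y \<in> carrier G \<Longrightarrow> (\<lambda>y. B (A y)) y \<in> carrier G" using Ac Bc by simp
  have BAh: "\<And>y z. y\<in>carrier G \<Longrightarrow> z \<in> carrier G \<Longrightarrow> (\<lambda>y. B (A y)) (y \<otimes> z) = (\<lambda>y. B (A y)) y \<otimes> (\<lambda>y. B (A y)) z"
    using Ac Bc Ah Bh by simp
  have BA'c: "\<And>y. y \<in> carrier G \<Longrightarrow> (\<lambda>y. B (A' y)) y \<in> carrier G" using A'c Bc by simp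
  have BA'h: "\<And>y z. y\<in>carrier G \<Longrightarrow> z \<in> carrier G \<Longrightarrow> (\<lambda>y. B (A' y)) (y \<otimes> z) = (\<lambda>y. B (A' y)) y \<otimes> (\<lambda>y. B (A' y)) z"
    using A'c Bc A'h Bh by simp
  have B'Ac: "\<And>y. y \<in> carrier G \<Longrightarrow> (\<lambda>y. B' (A y)) y \<in> carrier G" using Ac B'c by simp
  have B'Ah: "\<And>y z. y\<in>carrier G \<Longrightarrow> z \<in> carrier G \<Longrightarrow> (\<lambda>y. B' (A y)) (y \<otimes> z) = (\<lambda>y. B' (A y)) y \<otimes> (\<lambda>y. B' (A y)) z"
    using Ac B'c Ah B'h by simp
  have QBA: "\<And>y. y \<in> carrier G \<Longrightarrow> (\<lambda>y. B (A y)) ((\<lambda>y. B (A y)) y) \<otimes> (\<lambda>y. B (A y)) y \<otimes> y = \<one>" using QBA0 by simp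
  have QBA': "\<And>y. y \<in> carrier G \<Longrightarrow> (\<lambda>y. B (A' y)) ((\<lambda>y. B (A' y)) y) \<otimes> (\<lambda>y. B (A' y)) y \<otimes> y = \<one>" using QBA'0 by simp
  have QB'A: "\<And>y. y \<in> carrier G \<Longrightarrow> (\<lambda>y. B' (A y)) ((\<lambda>y. B' (A y)) y) \<otimes> (\<lambda>y. B' (A y)) y \<otimes> y = \<one>" using QB'A0 by simp
  note gA = gen[OF Ac Ah QA] and gB = gen[OF Bc Bh QB]
  have DA': "\<And>y. y \<in> carrier G \<Longrightarrow> D A' y = inv (D A y)" using inverse[OF Ac Ah A'c AA' QA] .
  have DB': "\<And>y. y \<in> carrier G \<Longrightarrow> D B' y = inv (D B y)" using inverse[OF Bc Bh B'c BB' QB] .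
  have DAc: "\<And>y. y \<in> carrier G \<Longrightarrow> D A y \<in> carrier G" using gA(3) .
  have DBc: "\<And>y. y \<in> carrier G \<Longrightarrow> D B y \<in> carrier G" using gB(3) .
  have M1: "\<And>y. y \<in> carrier G \<Longrightarrow> D A y \<otimes> D B y \<otimes> D B (D A y) = D (\<lambda>y. B (A y)) y"
    using compo[OF Bc Bh Ac] by simp
  have M2: "\<And>y. y \<in> carrier G \<Longrightarrow> inv (D A y) \<otimes> D B y \<otimes> D B (inv (D A y)) = D (\<lambda>y. B (A' y)) y"
    using compo[OF Bc Bh A'c] DA' by simp
  have M3: "\<And>y. y \<in> carrier G \<Longrightarrow> D A y \<otimes> inv (D B y) \<otimes> inv (D B (D A y)) = D (\<lambda>y. B' (A y)) y"
    using compo[OF B'c B'h Ac] DB' DAc by simp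
  note gBA = gen[where T="\<lambda>y. B (A y)", OF BAc BAh QBA] and gBA' = gen[where T="\<lambda>y. B (A' y)", OF BA'c BA'h QBA'] and gB'A = gen[where T="\<lambda>y. B' (A y)", OF B'Ac B'Ah QB'A]
  have "D A (D B y) \<otimes> D B (D A y) = \<one>"
  proof (rule key[of "D A" "D B"])
    show "\<And>z. z \<in> carrier G \<Longrightarrow> z \<otimes> z \<otimes> z = \<one>" by (rule e3)
    show "\<And>y. y \<in> carrier G \<Longrightarrow> D A y \<in> carrier G" by (rule DAc)
    show "\<And>y. y \<in> carrier G \<Longrightarrow> D B y \<in> carrier G" by (rule DBc)
    show "\<And>y z. y\<in>carrier G \<Longrightarrow> z \<in> carrier G \<Longrightarrow> D A (y \<otimes> z) = D A y \<otimes> D A z" by (rule gA(2))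
    show "\<And>y z. y\<in>carrier G \<Longrightarrow> z \<in> carrier G \<Longrightarrow> D B (y \<otimes> z) = D B y \<otimes> D B z" by (rule gB(2))
    show "\<And>y. y \<in> carrier G \<Longrightarrow> D A (D A y) = \<one>" by (rule gA(1))
    show "\<And>y. y \<in> carrier G \<Longrightarrow> D B (D B y) = \<one>" by (rule gB(1))
    show "y \<in> carrier G" by (rule y)
    show "\<And>y. y\<in>carrier G \<Longrightarrow> (let M = (\<lambda>y. D A y \<otimes> D B y \<otimes> D B (D A y)) in M (M y)) = \<one>"
    proof -
      fix y assume y: "y \<in> carrier G"
      have c: "D (\<lambda>y. B (A y)) y \<in> carrier G" using y by (simp add: D_def Ac Bc A'c B'c)
      have dd: "D (\<lambda>y. B (A y)) (D (\<lambda>y. B (A y)) y) = \<one>"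
        by (rule gen(1)[of "\<lambda>y. B (A y)" y y]) (use Ac Bc A'c B'c Ah Bh A'h B'h QBA0 y in auto)
      show "(let M = (\<lambda>y. D A y \<otimes> D B y \<otimes> D B (D A y)) in M (M y)) = \<one>" unfolding Let_def by (simp only: M1[OF y] M1[OF c] dd)
    qed
    show "\<And>y. y\<in>carrier G \<Longrightarrow> (let M = (\<lambda>y. inv (D A y) \<otimes> D B y \<otimes> D B (inv (D A y))) in M (M y)) = \<one>"
    proof -
      fix y assume y: "y \<in> carrier G"
      have c: "D (\<lambda>y. B (A' y)) y \<in> carrier G" using y by (simp add: D_def Ac Bc A'c B'c)
      have dd: "D (\<lambda>y. B (A' y)) (D (\<lambda>y. B (A' y)) y) = \<one>"
        by (rule gen(1)[of "\<lambda>y. B (A' y)" y y]) (use Ac Bc A'c B'c Ah Bh A'h B'h QBA'0 y in auto)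
      show "(let M = (\<lambda>y. inv (D A y) \<otimes> D B y \<otimes> D B (inv (D A y))) in M (M y)) = \<one>" unfolding Let_def by (simp only: M2[OF y] M2[OF c] dd)
    qed
    show "\<And>y. y\<in>carrier G \<Longrightarrow> (let M = (\<lambda>y. D A y \<otimes> inv (D B y) \<otimes> inv (D B (D A y))) in M (M y)) = \<one>"
    proof -
      fix y assume y: "y \<in> carrier G"
      have c: "D (\<lambda>y. B' (A y)) y \<in> carrier G" using y by (simp add: D_def Ac Bc A'c B'c)
      have dd: "D (\<lambda>y. B' (A y)) (D (\<lambda>y. B' (A y)) y) = \<one>"
        by (rule gen(1)[of "\<lambda>y. B' (A y)" y y]) (use Ac Bc A'c B'c Ah Bh A'h B'h QB'A0 y in auto)
      show "(let M = (\<lambda>y. D A y \<otimes> inv (D B y) \<otimes> inv (D B (D A y))) in M (M y)) = \<one>" unfolding Let_def by (simp only: M3[OF y] M3[OF c] dd)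
    qed
  qed
  then show ?thesis by (simp add: D_def)
qed


definition cj :: "('a, 'b) monoid_scheme \<Rightarrow> 'a \<Rightarrow> 'a \<Rightarrow> 'a" where
  "cj G y g = inv\<^bsub>G\<^esub> g \<otimes>\<^bsub>G\<^esub> y \<otimes>\<^bsub>G\<^esub> g"

locale semi3 = group +
  assumes semi: "semi_p_abelian 3 G"
begin

definition E where "E = {g \<in> carrier G. g \<otimes> g \<otimes> g = \<one>}"

lemma pow3: "x \<in> carrier G \<Longrightarrow> x [^] (3::nat) = x \<otimes> x \<otimes> x"
  by (simp add: numeral_3_eq_3)

lemma semi': "a \<in> carrier G \<Longrightarrow> b \<in> carrier G \<Longrightarrow>
   (a \<otimes> b) \<otimes> (a \<otimes> b) \<otimes> (a \<otimes> b) = \<one> \<longleftrightarrow> (a \<otimes> a \<otimes> a) \<otimes> (b \<otimes> b \<otimes> b) = \<one>"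
  using semi unfolding semi_p_abelian_def by (simp add: pow3)

lemma E_carrier: "E \<subseteq> carrier G" by (auto simp: E_def)

lemma E_mult: "y \<in> E \<Longrightarrow> z \<in> E \<Longrightarrow> y \<otimes> z \<in> E"
  using semi'[of y z] by (auto simp: E_def)

lemma E_inv: "y \<in> E \<Longrightarrow> inv y \<in> E"
proof -
  assume y: "y \<in> E"
  hence yc: "y \<in> carrier G" by (auto simp: E_def)
  have "inv y \<otimes> inv y \<otimes> inv y = inv (y \<otimes> y \<otimes> y)" using yc by (simp add: inv_mult_group m_assoc)
  also have "\<dots> = \<one>" using y by (simp add: E_def)
  finally show ?thesis using yc by (simp add: E_def)
qed

lemma gen_E:
  assumes S: "S \<subseteq> E" shows "generate G S \<subseteq> E"
proof
  fix n assume "n \<in> generate G S"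
  then show "n \<in> E"
  proof (induction rule: generate.induct)
    case one then show ?case by (simp add: E_def)
  next
    case (incl h) then show ?case using S by auto
  next
    case (inv h) then show ?case using S E_inv by auto
  next
    case (eng h1 h2) then show ?case using E_mult by auto
  qed
qed

lemma Omega_E: "Omega1 3 G \<subseteq> E"
  unfolding Omega1_def by (rule gen_E) (auto simp: E_def pow3)

lemma cj_closed[simp]: "y \<in> carrier G \<Longrightarrow> g \<in> carrier G \<Longrightarrow> cj G y g \<in> carrier G"
  by (simp add: cj_def)

lemma cj_mult: "y \<in> carrier G \<Longrightarrow> z \<in> carrier G \<Longrightarrow> g \<in> carrier G \<Longrightarrow> cj G (y \<otimes> z) g = cj G y g \<otimes> cj G z g"
  by (simp add: cj_def m_assoc cancel_inv)

lemma cj_inv: "y \<in> carrier G \<Longrightarrow> g \<in> carrier G \<Longrightarrow> cj G (inv y) g = inv (cj G y g)"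
  by (simp add: cj_def m_assoc inv_mult_group)

lemma cj_cj: "y \<in> carrier G \<Longrightarrow> g \<in> carrier G \<Longrightarrow> h \<in> carrier G \<Longrightarrow> cj G (cj G y g) h = cj G y (g \<otimes> h)"
  by (simp add: cj_def m_assoc inv_mult_group)

lemma cj_cancel: "y \<in> carrier G \<Longrightarrow> g \<in> carrier G \<Longrightarrow> cj G (cj G y (inv g)) g = y"
  by (simp add: cj_def m_assoc cancel_inv)

lemma cj_one: "y \<in> carrier G \<Longrightarrow> cj G y \<one> = y"
  by (simp add: cj_def)

lemma cj_E: "y \<in> E \<Longrightarrow> g \<in> carrier G \<Longrightarrow> cj G y g \<in> E"
proof -
  assume y: "y \<in> E" and g: "g \<in> carrier G"
  hence yc: "y \<in> carrier G" by (auto simp: E_def)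
  have "cj G y g \<otimes> cj G y g \<otimes> cj G y g = cj G (y \<otimes> y \<otimes> y) g" using yc g by (simp add: cj_mult)
  also have "\<dots> = \<one>" using y g by (simp add: E_def cj_def)
  finally show ?thesis using yc g by (simp add: E_def)
qed

lemma Q: "y \<in> E \<Longrightarrow> g \<in> carrier G \<Longrightarrow> cj G (cj G y g) g \<otimes> cj G y g \<otimes> y = \<one>"
proof -
  assume y: "y \<in> E" and g: "g \<in> carrier G"
  hence yc: "y \<in> carrier G" by (auto simp: E_def)
  have "(g \<otimes> y \<otimes> inv g) \<otimes> (g \<otimes> y \<otimes> inv g) \<otimes> (g \<otimes> y \<otimes> inv g) = g \<otimes> (y \<otimes> y \<otimes> y) \<otimes> inv g"
    using yc g by (simp add: m_assoc cancel_inv)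
  also have "\<dots> = \<one>" using y g by (simp add: E_def)
  finally have "((g \<otimes> y) \<otimes> inv g) \<otimes> ((g \<otimes> y) \<otimes> inv g) \<otimes> ((g \<otimes> y) \<otimes> inv g) = \<one>" .
  hence X: "((g \<otimes> y) \<otimes> (g \<otimes> y) \<otimes> (g \<otimes> y)) \<otimes> (inv g \<otimes> inv g \<otimes> inv g) = \<one>"
    using semi'[of "g \<otimes> y" "inv g"] yc g by simp
  have "cj G (cj G y g) g \<otimes> cj G y g \<otimes> y =
     inv g \<otimes> inv g \<otimes> inv g \<otimes> (((g \<otimes> y) \<otimes> (g \<otimes> y) \<otimes> (g \<otimes> y)) \<otimes> (inv g \<otimes> inv g \<otimes> inv g) \<otimes> g \<otimes> g \<otimes> g)"
    using yc g by (simp add: cj_def m_assoc cancel_inv)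
  also have "\<dots> = \<one>" unfolding X using g by (simp add: m_assoc cancel_inv)
  finally show ?thesis .
qed

lemma comm_conj: "y \<in> E \<Longrightarrow> g \<in> carrier G \<Longrightarrow> y \<otimes> cj G y g = cj G y g \<otimes> y"
proof -
  assume y: "y \<in> E" and g: "g \<in> carrier G"
  hence yc: "y \<in> carrier G" by (auto simp: E_def)
  define u where "u = cj G y g"
  define w where "w = cj G u g"
  have uc: "u \<in> carrier G" and wc: "w \<in> carrier G" using yc g by (simp_all add: u_def w_def)
  have 1: "w \<otimes> (u \<otimes> y) = \<one>" using Q[OF y g] by (simp add: u_def w_def m_assoc yc g)
  have "cj G (cj G (inv y) g) g \<otimes> cj G (inv y) g \<otimes> inv y = \<one>" using Q[OF E_inv[OF y] g] .
  hence "inv w \<otimes> inv u \<otimes> inv y = \<one>" using yc g by (simp add: cj_inv u_def w_def)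
  hence "inv (y \<otimes> u \<otimes> w) = \<one>" using yc uc wc by (simp add: inv_mult_group m_assoc)
  hence 2: "(y \<otimes> u) \<otimes> w = \<one>" using yc uc wc by (metis inv_inv inv_one m_closed)
  have a: "inv (u \<otimes> y) = w" using 1 uc yc wc by (intro inv_equality) auto
  have b: "inv w = y \<otimes> u" using 2 uc yc wc by (intro inv_equality) auto
  have "u \<otimes> y = y \<otimes> u" using a b uc yc by (metis inv_inv m_closed)
  then show ?thesis by (simp add: u_def)
qed

lemma conj_comm: "x \<in> E \<Longrightarrow> g \<in> carrier G \<Longrightarrow> h \<in> carrier G \<Longrightarrow>
   cj G x g \<otimes> cj G x h = cj G x h \<otimes> cj G x g"
proof -
  assume x: "x \<in> E" and g: "g \<in> carrier G" and h: "h \<in> carrier G"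
  hence xc: "x \<in> carrier G" by (auto simp: E_def)
  define k where "k = h \<otimes> inv g"
  have kc: "k \<in> carrier G" using g h by (simp add: k_def)
  have hk: "cj G x h = cj G (cj G x k) g" using xc g h by (simp add: cj_cj k_def m_assoc)
  have "x \<otimes> cj G x k = cj G x k \<otimes> x" using comm_conj[OF x kc] .
  hence "cj G (x \<otimes> cj G x k) g = cj G (cj G x k \<otimes> x) g" by simp
  thus ?thesis using xc g kc hk by (simp add: cj_mult)
qed

lemma commutes_gen:
  assumes z: "z \<in> carrier G" and S: "S \<subseteq> carrier G" and c: "\<And>s. s \<in> S \<Longrightarrow> s \<otimes> z = z \<otimes> s"
    and n: "n \<in> generate G S"
  shows "n \<otimes> z = z \<otimes> n"
  using n
proof (induction rule: generate.induct)
  case one then show ?case using z by simp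
next
  case (incl h) then show ?case using c by simp
next
  case (inv h)
  have hc: "h \<in> carrier G" using inv S by auto
  have "inv h \<otimes> (h \<otimes> z) \<otimes> inv h = inv h \<otimes> (z \<otimes> h) \<otimes> inv h" using c[OF inv] by simp
  then show ?case using hc z by (simp add: m_assoc cancel_inv)
next
  case (eng h1 h2)
  have "h1 \<in> carrier G" "h2 \<in> carrier G" using eng(1,2) generate_incl[OF S] by auto
  then show ?case using eng z by (metis m_assoc)
qed

lemma comm_cj: "y \<in> carrier G \<Longrightarrow> g \<in> carrier G \<Longrightarrow> comm G y g = inv y \<otimes> cj G y g"
  by (simp add: comm_def cj_def m_assoc)

lemma main:
  assumes xE: "x \<in> E" and a: "a \<in> carrier G" and b: "b \<in> carrier G"
  shows "comm3 G x b a \<otimes> comm3 G x a b = \<one>"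
proof -
  have xc: "x \<in> carrier G" using xE E_carrier by auto
  define C where "C = (\<lambda>g. cj G x g) ` carrier G"
  define N where "N = generate G C"
  have Cc: "C \<subseteq> carrier G" using xc by (auto simp: C_def)
  have CE: "C \<subseteq> E" using xE by (auto simp: C_def cj_E)
  have Nc: "N \<subseteq> carrier G" unfolding N_def by (rule generate_incl[OF Cc])
  have NE: "N \<subseteq> E" unfolding N_def by (rule gen_E[OF CE])
  have Ncomm1: "n \<otimes> c = c \<otimes> n" if n: "n \<in> N" and c: "c \<in> C" for n c
  proof (rule commutes_gen[OF _ Cc _ n[unfolded N_def]])
    show "c \<in> carrier G" using c Cc by auto
    fix s assume "s \<in> C" then show "s \<otimes> c = c \<otimes> s" using c xE by (auto simp: C_def intro: conj_comm)
  qed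
  have Ncomm: "n \<otimes> m = m \<otimes> n" if n: "n \<in> N" and m: "m \<in> N" for n m
  proof (rule commutes_gen[OF _ Cc _ n[unfolded N_def]])
    show "m \<in> carrier G" using m Nc by auto
    fix s assume "s \<in> C" then show "s \<otimes> m = m \<otimes> s" using Ncomm1[OF m] by simp
  qed
  have Nconj: "cj G n g \<in> N" if n: "n \<in> N" and g: "g \<in> carrier G" for n g
    using n[unfolded N_def] unfolding N_def
  proof (induction rule: generate.induct)
    case one then show ?case using g by (simp add: cj_def generate.one)
  next
    case (incl h)
    then obtain k where k: "k \<in> carrier G" "h = cj G x k" by (auto simp: C_def)
    have "cj G h g = cj G x (k \<otimes> g)" using k xc g by (simp add: cj_cj)
    then have "cj G h g \<in> C" using k g by (auto simp: C_def)
    then show ?case by (rule generate.incl)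
  next
    case (inv h)
    then obtain k where k: "k \<in> carrier G" "h = cj G x k" by (auto simp: C_def)
    have "cj G h g = cj G x (k \<otimes> g)" using k xc g by (simp add: cj_cj)
    then have "cj G h g \<in> C" using k g by (auto simp: C_def)
    then have "inv (cj G h g) \<in> generate G C" by (rule generate.inv)
    then show ?case using k xc g by (simp add: cj_inv)
  next
    case (eng h1 h2)
    have "h1 \<in> carrier G" "h2 \<in> carrier G" using eng(1,2) generate_incl[OF Cc] by auto
    then show ?case using eng g by (simp add: cj_mult generate.eng)
  qed
  have "x \<in> C" unfolding C_def using xc by (intro rev_image_eqI[of \<one>]) (auto simp: cj_one)
  hence xN: "x \<in> N" unfolding N_def by (rule generate.incl)
  have sg: "subgroup N G" unfolding N_def by (rule generate_is_subgroup[OF Cc])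
  have cH: "comm_group (G\<lparr>carrier := N\<rparr>)"
    by (rule group.group_comm_groupI[OF subgroup.subgroup_is_group[OF sg is_group]]) (simp add: Ncomm)
  have NQ: "cj G (cj G y g) g \<otimes> cj G y g \<otimes> y = \<one>" if "y \<in> N" "g \<in> carrier G" for y g
    using Q[of y g] that NE by auto
  have NQ2: "cj G (cj G (cj G (cj G y g) h) g) h \<otimes> cj G (cj G y g) h \<otimes> y = \<one>"
    if y: "y \<in> N" and g: "g \<in> carrier G" and h: "h \<in> carrier G" for y g h
  proof -
    have yc: "y \<in> carrier G" using y Nc by auto
    have e1: "cj G (cj G y g) h = cj G y (g \<otimes> h)" using yc g h by (simp add: cj_cj)
    have e2: "cj G (cj G (cj G y (g \<otimes> h)) g) h = cj G (cj G y (g \<otimes> h)) (g \<otimes> h)"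
      using yc g h by (simp add: cj_cj m_assoc)
    show ?thesis unfolding e1 e2 using NQ[OF y] g h by simp
  qed
  have Nc': "y \<in> carrier G" if "y \<in> N" for y using that Nc by auto
  have K: "inv\<^bsub>G\<lparr>carrier := N\<rparr>\<^esub> (inv\<^bsub>G\<lparr>carrier := N\<rparr>\<^esub> x \<otimes>\<^bsub>G\<lparr>carrier := N\<rparr>\<^esub> cj G x b) \<otimes>\<^bsub>G\<lparr>carrier := N\<rparr>\<^esub>
        cj G (inv\<^bsub>G\<lparr>carrier := N\<rparr>\<^esub> x \<otimes>\<^bsub>G\<lparr>carrier := N\<rparr>\<^esub> cj G x b) a \<otimes>\<^bsub>G\<lparr>carrier := N\<rparr>\<^esub>
       (inv\<^bsub>G\<lparr>carrier := N\<rparr>\<^esub> (inv\<^bsub>G\<lparr>carrier := N\<rparr>\<^esub> x \<otimes>\<^bsub>G\<lparr>carrier := N\<rparr>\<^esub> cj G x a) \<otimes>\<^bsub>G\<lparr>carrier := N\<rparr>\<^esub>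
        cj G (inv\<^bsub>G\<lparr>carrier := N\<rparr>\<^esub> x \<otimes>\<^bsub>G\<lparr>carrier := N\<rparr>\<^esub> cj G x a) b) = \<one>\<^bsub>G\<lparr>carrier := N\<rparr>\<^esub>"
  proof (rule comm_group.key2[OF cH, of "\<lambda>y. cj G y a" "\<lambda>y. cj G y (inv a)" "\<lambda>y. cj G y b" "\<lambda>y. cj G y (inv b)" x])
    show "\<And>z. z \<in> carrier (G\<lparr>carrier := N\<rparr>) \<Longrightarrow> z \<otimes>\<^bsub>G\<lparr>carrier := N\<rparr>\<^esub> z \<otimes>\<^bsub>G\<lparr>carrier := N\<rparr>\<^esub> z = \<one>\<^bsub>G\<lparr>carrier := N\<rparr>\<^esub>"
      using NE by (auto simp: E_def)
  qed (use a b xN in \<open>auto simp: Nconj cj_mult Nc' cj_cancel NQ NQ2\<close>)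
  have iN: "inv x \<in> N" using sg xN by (rule subgroup.m_inv_closed)
  have cb: "inv x \<otimes> cj G x b \<in> N" using sg iN Nconj[OF xN b] by (rule subgroup.m_closed)
  have ca: "inv x \<otimes> cj G x a \<in> N" using sg iN Nconj[OF xN a] by (rule subgroup.m_closed)
  have K': "inv (inv x \<otimes> cj G x b) \<otimes> cj G (inv x \<otimes> cj G x b) a \<otimes>
      (inv (inv x \<otimes> cj G x a) \<otimes> cj G (inv x \<otimes> cj G x a) b) = \<one>"
    using K by (simp add: m_inv_consistent[OF sg] xN cb ca)
  show ?thesis unfolding comm3_def using K' xc a b by (simp add: comm_cj)
qed

end

theorem lemma3p1:
  fixes G (structure)
  assumes "is_p_group 3 G"
    and "semi_p_abelian 3 G"
    and "x \<in> Omega1 3 G"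
    and "a \<in> carrier G" and "b \<in> carrier G"
  shows "comm3 G x b a \<otimes>\<^bsub>G\<^esub> comm3 G x a b = \<one>\<^bsub>G\<^esub>"
proof -
  have gG: "group G" using assms(1) by (simp add: is_p_group_def)
  interpret semi3 G by (intro semi3.intro gG semi3_axioms.intro assms(2))
  have "x \<in> E" using assms(3) Omega_E by auto
  then show ?thesis using main assms(4,5) by blast
qed

end
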